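(* Let $\theta^*\in\mathbb{R}^d$ with $\|\theta^*\|_2=\sqrt{d}$ and $\sigma>0$, and let $(x^L,y^L)$ be drawn from the $(\theta^*,\sigma)$-Gaussian mixture model. Suppose $v\in\mathbb{R}^d$ is a (fixed) unit vector such that $\big\|v-\frac{\theta^*}{\sqrt{d}}\big\|_2\le\tau$ for some constant $\tau<\sqrt{2}$. Then with probability at least $1-\exp\!\Big(-\frac{d(1-\frac{\tau^2}{2})^2}{2\sigma^2}\Big)$, we have $\mathrm{sign}(y^L\cdot v^\top x^L)\,v^\top\theta^*>0$.
   Context: The $(\theta^*,\sigma)$-Gaussian mixture model is the distribution on $\mathbb{R}^d\times\{\pm1\}$ obtained by drawing $y\in\{\pm1\}$ uniformly at random and then $x\sim\mathcal{N}(y\theta^*,\sigma^2 I_d)$. *)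

theory Defs
  imports "HOL-Probability.Probability"
begin

definition gauss_density :: "'a::euclidean_space \<Rightarrow> real \<Rightarrow> 'a \<Rightarrow> real" where
  "gauss_density mu sig x = (\<Prod>i\<in>Basis. normal_density (mu \<bullet> i) sig (x \<bullet> i))"

text \<open>The (theta, sig)-Gaussian mixture model on R^d x {-1,1}: y uniform on {-1,1},
  then x ~ N(y theta, sig^2 I).\<close>
definition gmm :: "'a::euclidean_space \<Rightarrow> real \<Rightarrow> ('a \<times> real) measure" where
  "gmm theta sig = density (lborel \<Otimes>\<^sub>M count_space {-1, 1::real})
      (\<lambda>(x, y). ennreal (1/2 * gauss_density (y *\<^sub>R theta) sig x))"

end

theory Submission
  imports Defs
begin

lemma nd_meas: "(\<lambda>x. normal_density (f x) sig (g x)) \<in> borel_measurable M"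
  if [measurable]: "f \<in> borel_measurable M" "g \<in> borel_measurable M"
  unfolding normal_density_def by measurable
lemma snd_meas[measurable]: "(snd :: _ \<Rightarrow> real) \<in> borel_measurable (M \<Otimes>\<^sub>M count_space A)"
  by (rule measurable_compose[OF measurable_snd]) (simp add: measurable_count_space_eq1)
lemma gd_meas[measurable]: "(\<lambda>(x::'a::euclidean_space, y::real). gauss_density (y *\<^sub>R theta) sig x) \<in> borel_measurable (lborel \<Otimes>\<^sub>M count_space {-1, 1::real})"
  unfolding gauss_density_def inner_scaleR_left case_prod_beta
  by (intro borel_measurable_prod nd_meas) measurable
lemma L1:
  assumes "sig > 0"
  shows "(\<integral>\<^sup>+x. ennreal (exp (c*x) * normal_density mu sig x) \<partial>lborel) = ennreal (exp (c*mu + c^2* sig^2/2))"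
proof -
  have pw: "exp (c*x) * normal_density mu sig x = exp (c*mu + c^2* sig^2/2) * normal_density (mu + c* sig^2) sig x" for x
  proof -
    have e: "c*x + (- ((x-mu)^2)/(2* sig^2)) = (c*mu + c^2* sig^2/2) + (- ((x-(mu + c* sig^2))^2)/(2* sig^2))"
      using assms by (simp add: field_simps power2_eq_square)
    have "exp (c*x) * exp (- ((x-mu)^2)/(2* sig^2)) = exp (c*mu + c^2* sig^2/2) * exp (- ((x-(mu + c* sig^2))^2)/(2* sig^2))"
      unfolding exp_add[symmetric] e ..
    then show ?thesis unfolding normal_density_def by (simp add: mult_ac)
  qed
  have "(\<integral>\<^sup>+x. ennreal (exp (c*x) * normal_density mu sig x) \<partial>lborel)
      = (\<integral>\<^sup>+x. ennreal (exp (c*mu + c^2* sig^2/2)) * ennreal (normal_density (mu + c* sig^2) sig x) \<partial>lborel)"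
    by (simp add: pw ennreal_mult)
  also have "\<dots> = ennreal (exp (c*mu + c^2* sig^2/2)) * (\<integral>\<^sup>+x. ennreal (normal_density (mu + c* sig^2) sig x) \<partial>lborel)"
    by (rule nn_integral_cmult) simp
  also have "(\<integral>\<^sup>+x. ennreal (normal_density (mu + c* sig^2) sig x) \<partial>lborel) = 1"
    using assms by (subst nn_integral_eq_integral) (auto simp: integrable_normal_density integral_normal_density)
  finally show ?thesis by simp
qed

lemma L2:
  fixes w mu :: "'a::euclidean_space"
  assumes "sig > 0"
  shows "(\<integral>\<^sup>+x. ennreal (exp (w \<bullet> x) * gauss_density mu sig x) \<partial>lborel) = ennreal (exp (w \<bullet> mu + sig^2 * (norm w)^2/2))"
proof -
  have pw: "exp (w \<bullet> x) * gauss_density mu sig x = (\<Prod>b\<in>Basis. exp ((w\<bullet>b) * (x\<bullet>b)) * normal_density (mu\<bullet>b) sig (x\<bullet>b))" for x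
    unfolding gauss_density_def prod.distrib
    by (subst euclidean_inner) (simp add: exp_sum inner_commute)
  have "(\<integral>\<^sup>+x. ennreal (exp (w \<bullet> x) * gauss_density mu sig x) \<partial>lborel)
     = (\<integral>\<^sup>+x. (\<Prod>b\<in>Basis. ennreal (exp ((w\<bullet>b) * (x\<bullet>b)) * normal_density (mu\<bullet>b) sig (x\<bullet>b))) \<partial>lborel)"
    by (simp add: pw prod_ennreal)
  also have "\<dots> = (\<Prod>b\<in>Basis. (\<integral>\<^sup>+x. ennreal (exp ((w\<bullet>b) * x) * normal_density (mu\<bullet>b) sig x) \<partial>lborel))"
    by (rule nn_integral_lborel_prod[where f="\<lambda>b x. exp ((w\<bullet>b) * x) * normal_density (mu\<bullet>b) sig x"]) auto
  also have "\<dots> = (\<Prod>b\<in>Basis. ennreal (exp ((w\<bullet>b)*(mu\<bullet>b) + (w\<bullet>b)^2* sig^2/2)))"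
    using assms by (simp add: L1)
  also have "\<dots> = ennreal (exp (\<Sum>b\<in>Basis. (w\<bullet>b)*(mu\<bullet>b) + (w\<bullet>b)^2* sig^2/2))"
    by (simp add: prod_ennreal exp_sum)
  also have "(\<Sum>b\<in>Basis. (w\<bullet>b)*(mu\<bullet>b) + (w\<bullet>b)^2* sig^2/2) = w \<bullet> mu + sig^2 * (norm w)^2/2"
  proof -
    have "(norm w)^2 = (\<Sum>b\<in>Basis. (w\<bullet>b)^2)"
      unfolding power2_norm_eq_inner by (subst euclidean_inner) (simp add: power2_eq_square)
    then show ?thesis
      by (simp add: sum.distrib euclidean_inner[of w mu] sum_divide_distrib sum_distrib_left mult_ac)
  qed
  finally show ?thesis .
qed

lemma sum_half: "(\<Sum>y\<in>{-1,1::real}. ennreal (1/2) * E) = E"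
proof -
  have "(\<Sum>y\<in>{-1,1::real}. ennreal (1/2) * E) = of_nat 2 * (ennreal (1/2) * E)"
    by (simp only: sum_constant) simp
  also have "\<dots> = (ennreal (of_nat 2) * ennreal (1/2)) * E"
    by (simp only: mult.assoc of_nat_numeral ennreal_numeral)
  also have "ennreal (of_nat 2) * ennreal (1/2) = 1"
    by (subst ennreal_mult[symmetric]) auto
  finally show ?thesis by simp
qed

lemma L3:
  fixes theta v :: "'a::euclidean_space"
  assumes "sig > 0"
  shows "(\<integral>\<^sup>+z. ennreal (1/2 * gauss_density (snd z *\<^sub>R theta) sig (fst z)) * ennreal (exp (c * snd z * (v \<bullet> fst z)))
           \<partial>(lborel \<Otimes>\<^sub>M count_space {-1, 1::real}))
         = ennreal (exp (c * (v \<bullet> theta) + sig^2 * c^2 * (norm v)^2 / 2))"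
proof -
  interpret P: pair_sigma_finite lborel "count_space {-1, 1::real}"
    by (intro pair_sigma_finite.intro lborel.sigma_finite_measure_axioms sigma_finite_measure_count_space_finite) simp
  have one: "(\<integral>\<^sup>+x. ennreal (1/2 * gauss_density (y *\<^sub>R theta) sig x) * ennreal (exp (c * y * (v \<bullet> x))) \<partial>lborel)
      = ennreal (1/2) * ennreal (exp (c * (v \<bullet> theta) + sig^2 * c^2 * (norm v)^2 / 2))" if y: "y \<in> {-1, 1}" for y
  proof -
    have "(\<integral>\<^sup>+x. ennreal (1/2 * gauss_density (y *\<^sub>R theta) sig x) * ennreal (exp (c * y * (v \<bullet> x))) \<partial>lborel)
        = (\<integral>\<^sup>+x. ennreal (1/2) * ennreal (exp (((c*y) *\<^sub>R v) \<bullet> x) * gauss_density (y *\<^sub>R theta) sig x) \<partial>lborel)"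
    proof (intro nn_integral_cong)
      fix x
      have G0: "gauss_density (y *\<^sub>R theta) sig x \<ge> 0" by (simp add: gauss_density_def prod_nonneg)
      have "ennreal (1/2 * gauss_density (y *\<^sub>R theta) sig x) * ennreal (exp (c * y * (v \<bullet> x)))
          = ennreal (1/2 * gauss_density (y *\<^sub>R theta) sig x * exp (c * y * (v \<bullet> x)))"
        using G0 by (subst ennreal_mult) auto
      also have "\<dots> = ennreal (1/2) * ennreal (exp (((c*y) *\<^sub>R v) \<bullet> x) * gauss_density (y *\<^sub>R theta) sig x)"
        using G0 by (subst ennreal_mult[symmetric]) (auto simp: mult_ac)
      finally show "ennreal (1/2 * gauss_density (y *\<^sub>R theta) sig x) * ennreal (exp (c * y * (v \<bullet> x)))
          = ennreal (1/2) * ennreal (exp (((c*y) *\<^sub>R v) \<bullet> x) * gauss_density (y *\<^sub>R theta) sig x)" .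
    qed
    also have "\<dots> = ennreal (1/2) * (\<integral>\<^sup>+x. ennreal (exp (((c*y) *\<^sub>R v) \<bullet> x) * gauss_density (y *\<^sub>R theta) sig x) \<partial>lborel)"
      by (rule nn_integral_cmult) (simp add: gauss_density_def normal_density_def)
    also have "\<dots> = ennreal (1/2) * ennreal (exp (((c*y) *\<^sub>R v) \<bullet> (y *\<^sub>R theta) + sig^2 * (norm ((c*y) *\<^sub>R v))^2/2))"
      by (simp only: L2[OF assms])
    also have "((c*y) *\<^sub>R v) \<bullet> (y *\<^sub>R theta) + sig^2 * (norm ((c*y) *\<^sub>R v))^2/2 = c * (v \<bullet> theta) + sig^2 * c^2 * (norm v)^2 / 2"
      using y by (auto simp: power_mult_distrib)
    finally show ?thesis .
  qed
  have "(\<integral>\<^sup>+z. ennreal (1/2 * gauss_density (snd z *\<^sub>R theta) sig (fst z)) * ennreal (exp (c * snd z * (v \<bullet> fst z)))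
           \<partial>(lborel \<Otimes>\<^sub>M count_space {-1, 1::real}))
      = (\<integral>\<^sup>+y. (\<integral>\<^sup>+x. ennreal (1/2 * gauss_density (y *\<^sub>R theta) sig x) * ennreal (exp (c * y * (v \<bullet> x))) \<partial>lborel) \<partial>count_space {-1, 1})"
    by (subst P.nn_integral_snd[symmetric]) (auto simp: case_prod_beta)
  also have "\<dots> = (\<Sum>y\<in>{-1,1::real}. (\<integral>\<^sup>+x. ennreal (1/2 * gauss_density (y *\<^sub>R theta) sig x) * ennreal (exp (c * y * (v \<bullet> x))) \<partial>lborel))"
    by (rule nn_integral_count_space_finite) simp
  also have "\<dots> = (\<Sum>y\<in>{-1,1::real}. ennreal (1/2) * ennreal (exp (c * (v \<bullet> theta) + sig^2 * c^2 * (norm v)^2 / 2)))"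
    by (rule sum.cong[OF refl]) (rule one)
  also have "\<dots> = ennreal (exp (c * (v \<bullet> theta) + sig^2 * c^2 * (norm v)^2 / 2))"
    by (rule sum_half)
  finally show ?thesis .
qed

theorem lemma2:
  fixes theta v :: "'a::euclidean_space" and sig tau :: real
  assumes "norm theta = sqrt (real DIM('a))"
    and "sig > 0"
    and "norm v = 1"
    and "norm (v - theta /\<^sub>R sqrt (real DIM('a))) \<le> tau"
    and "tau < sqrt 2"
  shows "measure (gmm theta sig)
           {(x, y) \<in> space (gmm theta sig). sgn (y * (v \<bullet> x)) * (v \<bullet> theta) > 0}
         \<ge> 1 - exp (- (real DIM('a) * (1 - tau\<^sup>2 / 2)\<^sup>2) / (2 * sig\<^sup>2))"
proof -
  define d where "d = real DIM('a)"
  define s where "s = sqrt d"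
  define m where "m = v \<bullet> theta"
  define M0 where "M0 = (lborel \<Otimes>\<^sub>M count_space {-1, 1::real} :: ('a \<times> real) measure)"
  define g where "g = (\<lambda>z::'a \<times> real. ennreal (1/2 * gauss_density (snd z *\<^sub>R theta) sig (fst z)))"
  have d0: "d > 0" unfolding d_def by simp
  have s0: "s > 0" unfolding s_def using d0 by simp
  have ss: "s * s = d" unfolding s_def using d0 by simp
  have th: "theta \<bullet> theta = d" using assms(1) unfolding d_def
    by (metis power2_norm_eq_inner real_sqrt_pow2 of_nat_0_le_iff)
  have vv: "v \<bullet> v = 1" using assms(3) by (metis power2_norm_eq_inner power_one)
  have tau0: "tau \<ge> 0" using assms(4) norm_ge_zero order_trans by blast
  have tau2: "tau^2 < 2" using tau0 assms(5)
    by (metis real_sqrt_less_iff real_sqrt_pow2 power2_less_imp_less pos2 less_eq_real_def real_sqrt_ge_0_iff zero_le_numeral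
        real_less_rsqrt real_sqrt_abs abs_of_nonneg)
  have nsq: "(norm (v - theta /\<^sub>R s))^2 = 2 - 2 * m / s"
  proof -
    have "(norm (v - theta /\<^sub>R s))^2 = v \<bullet> v - 2 * (v \<bullet> theta) / s + (theta \<bullet> theta) / (s * s)"
      unfolding power2_norm_eq_inner by (simp add: inner_diff_left inner_diff_right inner_commute field_simps)
    then show ?thesis using vv th ss d0 unfolding m_def by simp
  qed
  have "(norm (v - theta /\<^sub>R s))^2 \<le> tau^2"
    using assms(4) unfolding s_def d_def by (intro power_mono) auto
  then have "2 - 2 * m / s \<le> tau^2" using nsq by simp
  then have mge: "m \<ge> s * (1 - tau^2/2)" using s0 by (simp add: field_simps)
  have pos: "1 - tau^2/2 > 0" using tau2 by simp
  have m0: "m > 0" using mge s0 pos by (smt (verit) mult_pos_pos)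
  have msq: "m^2 \<ge> d * (1 - tau^2/2)^2"
  proof -
    have "(s * (1 - tau^2/2))^2 \<le> m^2" using mge s0 pos by (intro power_mono) auto
    moreover have "(s * (1 - tau^2/2))^2 = d * (1 - tau^2/2)^2"
      unfolding power_mult_distrib power2_eq_square[of s] ss ..
    ultimately show ?thesis by simp
  qed
  have gmm_eq: "gmm theta sig = density M0 (\<lambda>z. g z)"
    unfolding gmm_def M0_def g_def by (simp add: case_prod_unfold)
  have sp: "space (gmm theta sig) = space M0" unfolding gmm_eq by simp
  have sets: "sets (gmm theta sig) = sets M0" unfolding gmm_eq by simp
  have gmeas[measurable]: "g \<in> borel_measurable M0"
    unfolding g_def M0_def using gd_meas[of theta sig] by (simp add: case_prod_beta)
  have L3': "(\<integral>\<^sup>+z. g z * ennreal (exp (c * snd z * (v \<bullet> fst z))) \<partial>M0) = ennreal (exp (c * m + sig^2 * c^2 / 2))" for c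
    using L3[OF assms(2), of theta c v] assms(3) unfolding g_def M0_def m_def by simp
  have "emeasure (gmm theta sig) (space (gmm theta sig)) = (\<integral>\<^sup>+z. g z * indicator (space M0) z \<partial>M0)"
    unfolding gmm_eq by (subst emeasure_density) auto
  also have "\<dots> = (\<integral>\<^sup>+z. g z * ennreal (exp (0 * snd z * (v \<bullet> fst z))) \<partial>M0)"
    by (intro nn_integral_cong) simp
  also have "\<dots> = 1" using L3'[of 0] by simp
  finally have tot: "emeasure (gmm theta sig) (space (gmm theta sig)) = 1" .
  interpret P: prob_space "gmm theta sig" by (rule prob_spaceI[OF tot])
  define E where "E = {(x, y) \<in> space (gmm theta sig). sgn (y * (v \<bullet> x)) * (v \<bullet> theta) > 0}"
  have E_sets: "E \<in> sets (gmm theta sig)"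
  proof -
    have "E = {z \<in> space M0. sgn (snd z * (v \<bullet> fst z)) * m > 0}"
      unfolding E_def sp m_def by auto
    also have "\<dots> \<in> sets M0" unfolding M0_def by measurable
    finally show ?thesis using sets by simp
  qed
  define c where "c = - m / sig^2"
  have "emeasure (gmm theta sig) (space (gmm theta sig) - E) = (\<integral>\<^sup>+z. g z * indicator (space M0 - E) z \<partial>M0)"
    unfolding gmm_eq using E_sets sets sp by (subst emeasure_density) (auto simp: gmm_eq)
  also have "\<dots> \<le> (\<integral>\<^sup>+z. g z * ennreal (exp (c * snd z * (v \<bullet> fst z))) \<partial>M0)"
  proof (intro nn_integral_mono)
    fix z assume z: "z \<in> space M0"
    show "g z * indicator (space M0 - E) z \<le> g z * ennreal (exp (c * snd z * (v \<bullet> fst z)))"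
    proof (cases "z \<in> E")
      case True then show ?thesis by simp
    next
      case False
      then have "\<not> (sgn (snd z * (v \<bullet> fst z)) * m > 0)" using z unfolding E_def sp m_def by (auto simp: case_prod_beta)
      then have "snd z * (v \<bullet> fst z) \<le> 0" using m0 by (cases "snd z * (v \<bullet> fst z) > 0") auto
      moreover have "c \<le> 0" unfolding c_def using m0 assms(2) by simp
      ultimately have "c * snd z * (v \<bullet> fst z) \<ge> 0" by (simp add: mult.assoc mult_nonpos_nonpos)
      then have "1 \<le> exp (c * snd z * (v \<bullet> fst z))" by simp
      then have "indicator (space M0 - E) z \<le> ennreal (exp (c * snd z * (v \<bullet> fst z)))"
        by (simp add: indicator_def)
      then show ?thesis by (rule mult_left_mono) simp
    qed
  qed
  also have "\<dots> = ennreal (exp (c * m + sig^2 * c^2 / 2))" by (rule L3')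
  also have "c * m + sig^2 * c^2 / 2 = - (m^2) / (2 * sig^2)"
    unfolding c_def using assms(2) by (simp add: field_simps power2_eq_square)
  finally have "emeasure (gmm theta sig) (space (gmm theta sig) - E) \<le> ennreal (exp (- (m^2) / (2 * sig^2)))" .
  then have cb: "measure (gmm theta sig) (space (gmm theta sig) - E) \<le> exp (- (m^2) / (2 * sig^2))"
    by (simp add: P.emeasure_eq_measure)
  have "exp (- (m^2) / (2 * sig^2)) \<le> exp (- (d * (1 - tau\<^sup>2 / 2)\<^sup>2) / (2 * sig\<^sup>2))"
    using msq assms(2) by (simp add: divide_right_mono)
  moreover have "measure (gmm theta sig) E = 1 - measure (gmm theta sig) (space (gmm theta sig) - E)"
    using P.prob_compl[OF E_sets] by simp
  ultimately show ?thesis using cb unfolding E_def d_def by linarith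
qed

end
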